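(* Let $p_1,\ldots,p_m\in[0,1]$ and $\alpha\in[0,1]$, and let $q_\alpha$, $\hat\pi_\alpha$, $B_q$ be as in the context. For any $q\in[0,1]$ we have $\alpha\, q_\alpha(B_q)\le \hat\pi_\alpha q$, with equality if and only if $\hat\pi_\alpha q=0$ (equivalently $h_\alpha q=0$).
   Context: Setting: $m$ hypotheses with $p$-values $p_1,\ldots,p_m\in[0,1]$; $r_1,\ldots,r_m$ a permutation of $1,\ldots,m$ with $p_{r_1}\le\cdots\le p_{r_m}$, $p_{(i)}=p_{r_i}$, $L_i=\{r_1,\ldots,r_i\}$, $K_i=\{r_{m-i+1},\ldots,r_m\}$. For $I\subseteq\{1,\ldots,m\}$, $p_{(i:I)}$ is the $i$-th smallest of $\{p_j:j\in I\}$. Simes local test: $I\in\mathcal{U}_\alpha$ iff some $1\le i\le|I|$ has $|I|p_{(i:I)}\le i\alpha$. Closed testing: $\mathcal{X}_\alpha=\{I: J\in\mathcal{U}_\alpha\ \forall J\supseteq I\}$. $t_\alpha(S)=\max\{|I|:I\subseteq S, I\notin\mathcal{X}_\alpha\}$, and $q_\alpha(S)=t_\alpha(S)/|S|$ for $S\neq\emptyset$, $q_\alpha(\emptyset)=0$. $h_\alpha=\max\{0\le i\le m:K_i\notin\mathcal{U}_\alpha\}$, $\hat\pi_\alpha=h_\alpha/m$. For $q\in[0,1]$: $b_q=\max\{1\le i\le m: mp_{(i)}\le iq\}$ ($b_q=0$ if none), $B_q=L_{b_q}$ (the Benjamini–Hochberg rejection set at level $q$). *)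

theory Defs
  imports Complex_Main
begin

text \<open>Hypotheses are indexed by {1..m}; p-values are p :: nat => real.
  The sorting permutation r is a parameter (assumed to be a bijection of {1..m}
  sorting the p-values increasingly).\<close>

text \<open>i-th smallest (1-based, with multiplicity) of the p-values indexed by I.\<close>
definition pI :: "(nat \<Rightarrow> real) \<Rightarrow> nat set \<Rightarrow> nat \<Rightarrow> real" where
  "pI p I i = sort (map p (sorted_list_of_set I)) ! (i - 1)"

definition simes_U :: "(nat \<Rightarrow> real) \<Rightarrow> real \<Rightarrow> nat set \<Rightarrow> bool" where
  "simes_U p \<alpha> I \<longleftrightarrow> (\<exists>i\<in>{1..card I}. real (card I) * pI p I i \<le> real i * \<alpha>)"

definition closed_X :: "nat \<Rightarrow> (nat \<Rightarrow> real) \<Rightarrow> real \<Rightarrow> nat set \<Rightarrow> bool" where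
  "closed_X m p \<alpha> I \<longleftrightarrow> (\<forall>J. I \<subseteq> J \<and> J \<subseteq> {1..m} \<longrightarrow> simes_U p \<alpha> J)"

definition t_alpha :: "nat \<Rightarrow> (nat \<Rightarrow> real) \<Rightarrow> real \<Rightarrow> nat set \<Rightarrow> nat" where
  "t_alpha m p \<alpha> S = Max {card I | I. I \<subseteq> S \<and> \<not> closed_X m p \<alpha> I}"

definition q_alpha :: "nat \<Rightarrow> (nat \<Rightarrow> real) \<Rightarrow> real \<Rightarrow> nat set \<Rightarrow> real" where
  "q_alpha m p \<alpha> S = (if S = {} then 0 else real (t_alpha m p \<alpha> S) / real (card S))"

definition Lset :: "(nat \<Rightarrow> nat) \<Rightarrow> nat \<Rightarrow> nat set" where
  "Lset r i = r ` {1..i}"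

definition Kset :: "nat \<Rightarrow> (nat \<Rightarrow> nat) \<Rightarrow> nat \<Rightarrow> nat set" where
  "Kset m r i = r ` {m - i + 1..m}"

definition h_alpha :: "nat \<Rightarrow> (nat \<Rightarrow> real) \<Rightarrow> (nat \<Rightarrow> nat) \<Rightarrow> real \<Rightarrow> nat" where
  "h_alpha m p r \<alpha> = Max {i. i \<le> m \<and> \<not> simes_U p \<alpha> (Kset m r i)}"

definition pi_hat :: "nat \<Rightarrow> (nat \<Rightarrow> real) \<Rightarrow> (nat \<Rightarrow> nat) \<Rightarrow> real \<Rightarrow> real" where
  "pi_hat m p r \<alpha> = real (h_alpha m p r \<alpha>) / real m"

definition b_q :: "nat \<Rightarrow> (nat \<Rightarrow> real) \<Rightarrow> (nat \<Rightarrow> nat) \<Rightarrow> real \<Rightarrow> nat" where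
  "b_q m p r q = (if \<exists>i\<in>{1..m}. real m * p (r i) \<le> real i * q
                  then Max {i\<in>{1..m}. real m * p (r i) \<le> real i * q} else 0)"

definition BH :: "nat \<Rightarrow> (nat \<Rightarrow> real) \<Rightarrow> (nat \<Rightarrow> nat) \<Rightarrow> real \<Rightarrow> nat set" where
  "BH m p r q = Lset r (b_q m p r q)"

end

theory Submission
  imports Defs "HOL-Library.Multiset"
begin

lemma sorted_nth_le_iff:
  fixes xs :: "real list"
  assumes "sorted xs" "i < length xs"
  shows "xs ! i \<le> x \<longleftrightarrow> i < card {n. n < length xs \<and> xs ! n \<le> x}"
proof
  assume h: "xs ! i \<le> x"
  have "{0..i} \<subseteq> {n. n < length xs \<and> xs ! n \<le> x}"
  proof
    fix n assume "n \<in> {0..i}"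
    then have "n \<le> i" by simp
    then have "xs ! n \<le> xs ! i" using assms sorted_nth_mono by blast
    then show "n \<in> {n. n < length xs \<and> xs ! n \<le> x}" using h \<open>n \<le> i\<close> assms(2) by auto
  qed
  then have "card {0..i} \<le> card {n. n < length xs \<and> xs ! n \<le> x}"
    by (intro card_mono) auto
  then show "i < card {n. n < length xs \<and> xs ! n \<le> x}" by simp
next
  assume h: "i < card {n. n < length xs \<and> xs ! n \<le> x}"
  show "xs ! i \<le> x"
  proof (rule ccontr)
    assume "\<not> xs ! i \<le> x"
    have "{n. n < length xs \<and> xs ! n \<le> x} \<subseteq> {0..<i}"
    proof
      fix n assume n: "n \<in> {n. n < length xs \<and> xs ! n \<le> x}"
      have "\<not> i \<le> n"
      proof
        assume "i \<le> n"
        then have "xs ! i \<le> xs ! n" using assms sorted_nth_mono n by blast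
        then show False using n \<open>\<not> xs ! i \<le> x\<close> by auto
      qed
      then show "n \<in> {0..<i}" by auto
    qed
    then have "card {n. n < length xs \<and> xs ! n \<le> x} \<le> card {0..<i}"
      by (intro card_mono) auto
    then show False using h by simp
  qed
qed

lemma pI_le_iff:
  assumes "finite J" "1 \<le> i" "i \<le> card J"
  shows "pI p J i \<le> x \<longleftrightarrow> i \<le> card {j\<in>J. p j \<le> x}"
proof -
  define ys where "ys = map p (sorted_list_of_set J)"
  define xs where "xs = sort ys"
  have len: "length xs = card J" unfolding xs_def ys_def using assms by simp
  have "card {n. n < length xs \<and> xs ! n \<le> x} = length (filter (\<lambda>y. y \<le> x) xs)"
    by (simp add: length_filter_conv_card)
  also have "\<dots> = length (filter (\<lambda>y. y \<le> x) ys)"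
    unfolding xs_def by (metis mset_filter mset_sort size_mset)
  also have "\<dots> = length (filter (\<lambda>j. p j \<le> x) (sorted_list_of_set J))"
    unfolding ys_def by (simp add: filter_map o_def)
  also have "\<dots> = card {j\<in>J. p j \<le> x}"
    using assms(1) by (subst distinct_length_filter) (auto intro: arg_cong[where f=card])
  finally have c: "card {n. n < length xs \<and> xs ! n \<le> x} = card {j\<in>J. p j \<le> x}" .
  have "pI p J i = xs ! (i - 1)" unfolding pI_def xs_def ys_def by simp
  moreover have "xs ! (i-1) \<le> x \<longleftrightarrow> i - 1 < card {n. n < length xs \<and> xs ! n \<le> x}"
    by (rule sorted_nth_le_iff) (use len assms in \<open>auto simp: xs_def\<close>)
  ultimately show ?thesis using c assms(2) by auto
qed


lemma Kset_props:
  assumes r_bij: "bij_betw r {1..m} {1..m}" and k: "k \<le> m"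
  shows "card (Kset m r k) = k" "Kset m r k \<subseteq> {1..m}"
proof -
  have sub: "{m - k + 1..m} \<subseteq> {1..m}" using k by auto
  have "inj_on r {m - k + 1..m}" using inj_on_subset[OF bij_betw_imp_inj_on[OF r_bij] sub] .
  then show "card (Kset m r k) = k" unfolding Kset_def using k by (simp add: card_image)
  have "r ` {m - k + 1..m} \<subseteq> r ` {1..m}" using sub by (rule image_mono)
  then show "Kset m r k \<subseteq> {1..m}" unfolding Kset_def using bij_betw_imp_surj_on[OF r_bij] by simp
qed

lemma Kset_top:
  fixes p :: "nat \<Rightarrow> real"
  assumes r_bij: "bij_betw r {1..m} {1..m}"
    and r_sorted: "\<forall>i j. 1 \<le> i \<and> i \<le> j \<and> j \<le> m \<longrightarrow> p (r i) \<le> p (r j)"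
    and k: "k \<le> m" and j: "j \<in> {1..m} - Kset m r k" and j': "j' \<in> Kset m r k"
  shows "p j \<le> p j'"
proof -
  have "j \<in> r ` {1..m}" using j bij_betw_imp_surj_on[OF r_bij] by auto
  then obtain a where a: "a \<in> {1..m}" "j = r a" by auto
  obtain b where b: "b \<in> {m - k + 1..m}" "j' = r b" using j' unfolding Kset_def by auto
  have "a \<notin> {m - k + 1..m}" using a j unfolding Kset_def by auto
  then have "a \<le> b" using a b by auto
  then show ?thesis using r_sorted a b by auto
qed

lemma count_mono:
  fixes p :: "nat \<Rightarrow> real"
  assumes r_bij: "bij_betw r {1..m} {1..m}"
    and r_sorted: "\<forall>i j. 1 \<le> i \<and> i \<le> j \<and> j \<le> m \<longrightarrow> p (r i) \<le> p (r j)"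
    and J: "J \<subseteq> {1..m}" "card J = k" and k: "k \<le> m"
    and i: "1 \<le> i" "i \<le> card {j\<in>Kset m r k. p j \<le> x}"
  shows "i \<le> card {j\<in>J. p j \<le> x}"
proof -
  define K where "K = Kset m r k"
  define A where "A = {j\<in>K. p j \<le> x}"
  have cK: "card K = k" and sK: "K \<subseteq> {1..m}"
    using Kset_props[OF r_bij k] unfolding K_def by auto
  have fK: "finite K" using finite_subset[OF sK] by simp
  have fJ: "finite J" using finite_subset[OF J(1)] by simp
  have "card A > 0" using i unfolding A_def K_def by linarith
  then have "A \<noteq> {}" by auto
  then obtain j0 where j0: "j0 \<in> K" "p j0 \<le> x" unfolding A_def by auto
  have out: "p j \<le> x" if "j \<in> J - K" for j
  proof -
    have "j \<in> {1..m} - K" using that J by auto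
    then have "p j \<le> p j0" using Kset_top[OF r_bij r_sorted k, of j j0] j0 unfolding K_def by blast
    then show ?thesis using j0 by linarith
  qed
  have sup: "(J - K) \<union> (A \<inter> J) \<subseteq> {j\<in>J. p j \<le> x}" using out unfolding A_def by auto
  have "card ((J - K) \<union> (A \<inter> J)) = card (J - K) + card (A \<inter> J)"
    by (rule card_Un_disjoint) (use fJ in \<open>auto simp: A_def\<close>)
  also have "card (J - K) = card (K - J)"
  proof -
    have "card J = card (J \<inter> K) + card (J - K)" using fJ by (metis card_Int_Diff)
    moreover have "card K = card (K \<inter> J) + card (K - J)" using fK by (metis card_Int_Diff)
    ultimately show ?thesis using cK J(2) by (simp add: Int_commute)
  qed
  finally have e: "card ((J - K) \<union> (A \<inter> J)) = card (K - J) + card (A \<inter> J)" .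
  have "card A \<le> card ((K - J) \<union> (A \<inter> J))"
    by (rule card_mono) (use fK fJ in \<open>auto simp: A_def\<close>)
  also have "\<dots> \<le> card (K - J) + card (A \<inter> J)" by (rule card_Un_le)
  also have "\<dots> \<le> card {j\<in>J. p j \<le> x}"
  proof -
    have fin: "finite {j\<in>J. p j \<le> x}" using fJ by simp
    show ?thesis using e card_mono[OF fin sup] by linarith
  qed
  finally have "card A \<le> card {j\<in>J. p j \<le> x}" .
  moreover have "i \<le> card A" using i(2) unfolding A_def K_def .
  ultimately show ?thesis by (rule le_trans[rotated])
qed

lemma simes_mono:
  fixes p :: "nat \<Rightarrow> real"
  assumes r_bij: "bij_betw r {1..m} {1..m}"
    and r_sorted: "\<forall>i j. 1 \<le> i \<and> i \<le> j \<and> j \<le> m \<longrightarrow> p (r i) \<le> p (r j)"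
    and J: "J \<subseteq> {1..m}" and U: "simes_U p \<alpha> (Kset m r (card J))"
  shows "simes_U p \<alpha> J"
proof -
  define k where "k = card J"
  have fJ: "finite J" using finite_subset[OF J(1)] by simp
  have k: "k \<le> m" unfolding k_def using card_mono[OF _ J] by simp
  have cK: "card (Kset m r k) = k" and sK: "Kset m r k \<subseteq> {1..m}"
    using Kset_props[OF r_bij k] by auto
  have fK: "finite (Kset m r k)" using finite_subset[OF sK] by simp
  obtain i where i: "i \<in> {1..k}" "real k * pI p (Kset m r k) i \<le> real i * \<alpha>"
    using U unfolding simes_U_def k_def[symmetric] cK by auto
  have kpos: "real k > 0" using i by auto
  have "pI p (Kset m r k) i \<le> real i * \<alpha> / real k" using i kpos by (simp add: field_simps)
  then have "i \<le> card {j\<in>Kset m r k. p j \<le> real i * \<alpha> / real k}"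
    using pI_le_iff[OF fK, of i p] i cK by auto
  then have "i \<le> card {j\<in>J. p j \<le> real i * \<alpha> / real k}"
    using count_mono[OF r_bij r_sorted J k_def[symmetric] k] i by auto
  then have "pI p J i \<le> real i * \<alpha> / real k"
    using pI_le_iff[OF fJ, of i p] i k_def by auto
  then have "real k * pI p J i \<le> real i * \<alpha>" using kpos by (simp add: field_simps)
  then show ?thesis unfolding simes_U_def using i k_def by auto
qed


lemma simes_empty: "\<not> simes_U p \<alpha> {}"
  unfolding simes_U_def by simp

lemma h_props:
  shows "h_alpha m p r \<alpha> \<le> m"
    and "k \<le> m \<Longrightarrow> \<not> simes_U p \<alpha> (Kset m r k) \<Longrightarrow> k \<le> h_alpha m p r \<alpha>"
proof -
  let ?H = "{i. i \<le> m \<and> \<not> simes_U p \<alpha> (Kset m r i)}"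
  have fin: "finite ?H" by (rule finite_subset[of _ "{..m}"]) auto
  have "Kset m r 0 = {}" unfolding Kset_def by auto
  then have "0 \<in> ?H" using simes_empty by auto
  then have "h_alpha m p r \<alpha> \<in> ?H" unfolding h_alpha_def using fin Max_in by blast
  then show "h_alpha m p r \<alpha> \<le> m" by auto
  show "k \<le> m \<Longrightarrow> \<not> simes_U p \<alpha> (Kset m r k) \<Longrightarrow> k \<le> h_alpha m p r \<alpha>"
    unfolding h_alpha_def using fin by (intro Max_ge) auto
qed

lemma b_props:
  assumes "b_q m p r q \<noteq> 0"
  shows "1 \<le> b_q m p r q" "b_q m p r q \<le> m"
    "real m * p (r (b_q m p r q)) \<le> real (b_q m p r q) * q"
proof -
  let ?S = "{i\<in>{1..m}. real m * p (r i) \<le> real i * q}"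
  have ex: "\<exists>i\<in>{1..m}. real m * p (r i) \<le> real i * q"
    using assms unfolding b_q_def by (auto split: if_splits)
  then have "?S \<noteq> {}" by auto
  then have "Max ?S \<in> ?S" by (intro Max_in) auto
  moreover have "b_q m p r q = Max ?S" unfolding b_q_def using ex by simp
  ultimately show "1 \<le> b_q m p r q" "b_q m p r q \<le> m"
    "real m * p (r (b_q m p r q)) \<le> real (b_q m p r q) * q" by auto
qed

lemma key:
  fixes p :: "nat \<Rightarrow> real" and \<alpha> q :: real
  assumes r_bij: "bij_betw r {1..m} {1..m}"
    and r_sorted: "\<forall>i j. 1 \<le> i \<and> i \<le> j \<and> j \<le> m \<longrightarrow> p (r i) \<le> p (r j)"
    and q0: "0 \<le> q"
    and I: "I \<subseteq> BH m p r q" "\<not> closed_X m p \<alpha> I" "I \<noteq> {}"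
  shows "real (card I) * \<alpha> < real (h_alpha m p r \<alpha>) * (real (b_q m p r q) * q / real m)"
proof -
  define b where "b = b_q m p r q"
  define h where "h = h_alpha m p r \<alpha>"
  have "BH m p r q \<noteq> {}" using I by auto
  then have b0: "b \<noteq> 0" unfolding BH_def Lset_def b_def by auto
  note bp = b_props[OF b0[unfolded b_def], folded b_def]
  have mpos: "real m > 0" using bp by auto
  have bnd: "p j \<le> real b * q / real m" if "j \<in> I" for j
  proof -
    have "j \<in> r ` {1..b}" using that I(1) unfolding BH_def Lset_def b_def by blast
    then obtain a where a: "a \<in> {1..b}" "j = r a" by blast
    have "p (r a) \<le> p (r b)" using r_sorted a bp by auto
    moreover have "p (r b) \<le> real b * q / real m" using bp mpos by (simp add: field_simps)
    ultimately show ?thesis using a by simp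
  qed
  obtain J where J: "I \<subseteq> J" "J \<subseteq> {1..m}" "\<not> simes_U p \<alpha> J"
    using I(2) unfolding closed_X_def by auto
  define k where "k = card J"
  have fJ: "finite J" using finite_subset[OF J(2)] by simp
  have km: "k \<le> m" unfolding k_def using card_mono[OF _ J(2)] by simp
  have "\<not> simes_U p \<alpha> (Kset m r k)"
    using simes_mono[OF r_bij r_sorted J(2)] J(3) k_def by blast
  then have kh: "k \<le> h" unfolding h_def using h_props(2) km by blast
  define s where "s = card I"
  have s1: "1 \<le> s" unfolding s_def using I(3) finite_subset[OF J(1) fJ]
    by (metis One_nat_def Suc_leI card_gt_0_iff)
  have sk: "s \<le> k" unfolding s_def k_def using card_mono[OF fJ J(1)] .
  have "I \<subseteq> {j\<in>J. p j \<le> real b * q / real m}" using J(1) bnd by auto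
  then have "s \<le> card {j\<in>J. p j \<le> real b * q / real m}"
    unfolding s_def by (intro card_mono) (use fJ in auto)
  then have pIs: "pI p J s \<le> real b * q / real m"
    using pI_le_iff[OF fJ s1] sk k_def by auto
  have "real k * pI p J s > real s * \<alpha>"
    using J(3) s1 sk k_def unfolding simes_U_def by (auto simp: not_le)
  also have "real k * pI p J s \<le> real k * (real b * q / real m)"
    using pIs by (intro mult_left_mono) auto
  also have "\<dots> \<le> real h * (real b * q / real m)"
    using kh q0 mpos by (intro mult_right_mono) auto
  finally show ?thesis unfolding s_def h_def b_def .
qed

theorem lemma5:
  fixes m :: nat and p :: "nat \<Rightarrow> real" and r :: "nat \<Rightarrow> nat" and \<alpha> q :: real
  assumes p01: "\<forall>j\<in>{1..m}. 0 \<le> p j \<and> p j \<le> 1"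
    and r_bij: "bij_betw r {1..m} {1..m}"
    and r_sorted: "\<forall>i j. 1 \<le> i \<and> i \<le> j \<and> j \<le> m \<longrightarrow> p (r i) \<le> p (r j)"
    and \<alpha>01: "0 \<le> \<alpha>" "\<alpha> \<le> 1"
    and q01: "0 \<le> q" "q \<le> 1"
  shows "\<alpha> * q_alpha m p \<alpha> (BH m p r q) \<le> pi_hat m p r \<alpha> * q
    \<and> (\<alpha> * q_alpha m p \<alpha> (BH m p r q) = pi_hat m p r \<alpha> * q \<longleftrightarrow> pi_hat m p r \<alpha> * q = 0)
    \<and> (pi_hat m p r \<alpha> * q = 0 \<longleftrightarrow> real (h_alpha m p r \<alpha>) * q = 0)"
proof -
  define B where "B = BH m p r q"
  define b where "b = b_q m p r q"
  define h where "h = h_alpha m p r \<alpha>"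
  define t where "t = t_alpha m p \<alpha> B"
  have hm: "h \<le> m" unfolding h_def by (rule h_props(1))
  have fB: "finite B" unfolding B_def BH_def Lset_def by simp
  let ?T = "{card I | I. I \<subseteq> B \<and> \<not> closed_X m p \<alpha> I}"
  have "?T \<subseteq> card ` Pow B" by auto
  then have finT: "finite ?T" by (rule finite_subset) (use fB in simp)
  have "\<not> closed_X m p \<alpha> {}" unfolding closed_X_def using simes_empty by blast
  then have "0 \<in> ?T" by force
  then have "t \<in> ?T" unfolding t_def t_alpha_def using finT Max_in by blast
  then obtain I0 where I0: "I0 \<subseteq> B" "\<not> closed_X m p \<alpha> I0" "card I0 = t" by auto
  have keyI: "real t * \<alpha> < real h * (real b * q / real m)" if "t \<noteq> 0"
  proof -
    have "I0 \<noteq> {}" using that I0 by auto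
    then show ?thesis using key[OF r_bij r_sorted q01(1), of I0 \<alpha>] I0
      unfolding B_def h_def b_def by auto
  qed
  have pih: "pi_hat m p r \<alpha> * q = real h / real m * q" unfolding pi_hat_def h_def by simp
  have third: "pi_hat m p r \<alpha> * q = 0 \<longleftrightarrow> real h * q = 0"
    unfolding pih using hm by (cases "m = 0") auto
  have qa_nonneg: "q_alpha m p \<alpha> B \<ge> 0" unfolding q_alpha_def by simp
  show ?thesis
  proof (cases "real h * q = 0")
    case True
    have "t = 0"
    proof (rule ccontr)
      assume "t \<noteq> 0"
      then have "real t * \<alpha> < real h * (real b * q / real m)" by (rule keyI)
      moreover have "real h * (real b * q / real m) = 0" using True by (cases "h = 0") auto
      moreover have "real t * \<alpha> \<ge> 0" using \<alpha>01 by simp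
      ultimately show False by linarith
    qed
    then have "q_alpha m p \<alpha> B = 0" unfolding q_alpha_def t_def by simp
    then have e1: "\<alpha> * q_alpha m p \<alpha> (BH m p r q) = 0" unfolding B_def by simp
    have pz: "pi_hat m p r \<alpha> * q = 0" using True third by simp
    have hz: "real (h_alpha m p r \<alpha>) * q = 0" using True h_def by simp
    show ?thesis using e1 pz hz by linarith
  next
    case False
    then have hpos: "h > 0" and qpos: "q > 0" using q01 by auto
    then have mpos: "m > 0" using hm by auto
    have rhs: "pi_hat m p r \<alpha> * q > 0" using pih hpos qpos mpos by simp
    have "\<alpha> * q_alpha m p \<alpha> B < pi_hat m p r \<alpha> * q"
    proof (cases "B = {} \<or> t = 0")
      case True
      then have "q_alpha m p \<alpha> B = 0" unfolding q_alpha_def t_def by auto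
      then show ?thesis using rhs by simp
    next
      case False
      then have Bne: "B \<noteq> {}" and t0: "t \<noteq> 0" by auto
      then have b0: "b \<noteq> 0" unfolding B_def BH_def Lset_def b_def by auto
      note bp = b_props[OF b0[unfolded b_def], folded b_def]
      have "{1..b} \<subseteq> {1..m}" using bp by auto
      then have "inj_on r {1..b}" using inj_on_subset[OF bij_betw_imp_inj_on[OF r_bij]] by blast
      then have cB: "card B = b" unfolding B_def BH_def Lset_def b_def by (simp add: card_image)
      have qa: "q_alpha m p \<alpha> B = real t / real b" unfolding q_alpha_def t_def using Bne cB by simp
      have bpos: "real b > 0" using bp by auto
      have "real t * \<alpha> < real h * (real b * q / real m)" using keyI t0 by blast
      then have "\<alpha> * (real t / real b) < real h / real m * q"
        using bpos mpos by (simp add: field_simps)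
      then show ?thesis using qa pih by simp
    qed
    then have lt: "\<alpha> * q_alpha m p \<alpha> (BH m p r q) < pi_hat m p r \<alpha> * q" unfolding B_def .
    have hz: "real (h_alpha m p r \<alpha>) * q \<noteq> 0" using False h_def by simp
    show ?thesis using lt rhs hz by linarith
  qed
qed

end
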